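(* Let $T$ be a nonempty Hausdorff compact topological space, $\Omega$ a nonempty open subset of $\mathbb{R}^p$, and $h:\mathbb{R}^p\times T\to\mathbb{R}$, $f:\mathbb{R}^p\to\mathbb{R}$ functions. Assume that $\hat{x}\in\Omega$ is an optimal solution of the problem of maximizing $f(x)$ subject to $x\in\Omega$ and $h(x,t)\ge0$ for all $t\in T$, and that: (a) $T(\hat{x}):=\{t\in T:h(\hat{x},t)=0\}\neq\emptyset$; (b) $f$ is Gateaux differentiable at $\hat{x}$ and the family $(h(\cdot,t))_{t\in T}$ is equi-Gateaux differentiable at $\hat{x}$; (c) the family $(h(\cdot,t))_{t\in T\setminus T(\hat{x})}$ is equi-lower semicontinuous at $\hat{x}$; (d) the maps $t\mapsto h(\hat{x},t)$ and $t\mapsto\nabla_x h(\hat{x},t)$ are continuous. Then there exist $\lambda_i\ge0$ and $t_i\in T(\hat{x})$, $i=0,\dots,k$, with $k\le p$ and $\sum_{i=0}^k\lambda_i=1$, such that $$\lambda_0 d_G f(\hat{x})+\sum_{i=1}^k\lambda_i\nabla_x h(\hat{x},t_i)=0.$$ If moreover $0\notin\operatorname{conv}\{\nabla_x h(\hat{x},t):t\in T(\hat{x})\}$, then $\lambda_0\neq0$.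
   Context: $\nabla_x h(\hat x,t)$ denotes the Gateaux differential of $h(\cdot,t)$ at $\hat x$. A function $\phi$ is Gateaux differentiable at $x$ if there is a linear functional $d_G\phi(x)$ with $\lim_{t\searrow0}(\phi(x+tv)-\phi(x))/t=\langle d_G\phi(x),v\rangle$ for all $v$. A family $C$ of functions is equi-Gateaux differentiable at $x$ if each member is Gateaux differentiable at $x$ and for every $v$, $\lim_{s\searrow0}\sup_{\phi\in C}|(\phi(x+sv)-\phi(x)-s\langle d_G\phi(x),v\rangle)/s|=0$; it is equi-lower semicontinuous at $x$ if for every $\varepsilon>0$ there is an open neighbourhood $O$ of $x$ with $\phi(y)-\phi(x)>-\varepsilon$ for all $y\in O$ and all $\phi$ in the family. *)

theory Defs
  imports "HOL-Analysis.Analysis"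
begin

text \<open>Gateaux differential: a (bounded, automatically so in finite dimension) linear
functional d with lim_{s -> 0+} (phi(x + s v) - phi x)/s = d v for every direction v.\<close>

definition has_gateaux_diff :: "('a::real_normed_vector \<Rightarrow> real) \<Rightarrow> 'a \<Rightarrow> ('a \<Rightarrow>\<^sub>L real) \<Rightarrow> bool" where
  "has_gateaux_diff \<phi> x d \<longleftrightarrow>
     (\<forall>v. ((\<lambda>s. (\<phi> (x + s *\<^sub>R v) - \<phi> x) / s) \<longlongrightarrow> blinfun_apply d v) (at_right 0))"

definition gateaux_differentiable :: "('a::real_normed_vector \<Rightarrow> real) \<Rightarrow> 'a \<Rightarrow> bool" where
  "gateaux_differentiable \<phi> x \<longleftrightarrow> (\<exists>d. has_gateaux_diff \<phi> x d)"

definition gateaux_diff :: "('a::real_normed_vector \<Rightarrow> real) \<Rightarrow> 'a \<Rightarrow> ('a \<Rightarrow>\<^sub>L real)" where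
  "gateaux_diff \<phi> x = (THE d. has_gateaux_diff \<phi> x d)"

text \<open>Equi-Gateaux differentiability of the family (F i)_{i in I} at x:
  lim_{s -> 0+} sup_{i in I} |(F i (x+sv) - F i x - s d_G(F i)(x) v)/s| = 0, unfolded.\<close>
definition equi_gateaux_differentiable :: "('i \<Rightarrow> 'a::real_normed_vector \<Rightarrow> real) \<Rightarrow> 'i set \<Rightarrow> 'a \<Rightarrow> bool" where
  "equi_gateaux_differentiable F I x \<longleftrightarrow>
     (\<forall>i\<in>I. gateaux_differentiable (F i) x) \<and>
     (\<forall>v. \<forall>\<epsilon>>0. \<exists>\<delta>>0. \<forall>s. 0 < s \<and> s < \<delta> \<longrightarrow>
        (\<forall>i\<in>I. \<bar>(F i (x + s *\<^sub>R v) - F i x - s * blinfun_apply (gateaux_diff (F i) x) v) / s\<bar> \<le> \<epsilon>))"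

definition equi_lsc :: "('i \<Rightarrow> 'a::topological_space \<Rightarrow> real) \<Rightarrow> 'i set \<Rightarrow> 'a \<Rightarrow> bool" where
  "equi_lsc F I x \<longleftrightarrow>
     (\<forall>\<epsilon>>0. \<exists>U. open U \<and> x \<in> U \<and> (\<forall>y\<in>U. \<forall>i\<in>I. F i y - F i x > - \<epsilon>))"

end

theory Submission
  imports Defs
begin


lemma cone_reduce:
  fixes x :: "'a::euclidean_space"
  shows "finite S \<Longrightarrow> (\<forall>g\<in>S. \<kappa> g \<ge> 0) \<Longrightarrow> x = (\<Sum>g\<in>S. \<kappa> g *\<^sub>R g) \<Longrightarrow>
    \<exists>S' \<kappa>'. finite S' \<and> S' \<subseteq> S \<and> card S' \<le> DIM('a) \<and> (\<forall>g\<in>S'. \<kappa>' g \<ge> 0) \<and>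
       x = (\<Sum>g\<in>S'. \<kappa>' g *\<^sub>R g)"
proof (induction "card S" arbitrary: S \<kappa> rule: less_induct)
  case less
  show ?case
  proof (cases "card S \<le> DIM('a)")
    case True
    then show ?thesis using less.prems by blast
  next
    case False
    then have "dependent S" using dependent_biggerset[of S] by auto
    then obtain w g0 where g0: "g0 \<in> S" "w g0 \<noteq> 0" and w: "(\<Sum>v\<in>S. w v *\<^sub>R v) = 0"
      using dependent_finite[OF less.prems(1)] by auto
    define w' where "w' = (if w g0 < 0 then w else (\<lambda>v. - w v))"
    have w'0: "w' g0 < 0" using g0 by (auto simp: w'_def)
    have w': "(\<Sum>v\<in>S. w' v *\<^sub>R v) = 0"
      using w by (auto simp: w'_def sum_negf)
    define I where "I = (\<lambda>v. \<kappa> v / (- w' v)) ` {v\<in>S. w' v < 0}"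
    define t where "t = Min I"
    have Ine: "I \<noteq> {}" "finite I" using g0 w'0 less.prems(1) by (auto simp: I_def)
    obtain g1 where g1: "g1 \<in> S" "w' g1 < 0" "t = \<kappa> g1 / (- w' g1)"
      using Min_in[OF Ine(2) Ine(1)] unfolding t_def I_def by auto
    have t0: "t \<ge> 0" using g1 less.prems(2) by (auto simp: divide_nonneg_neg)
    have nn: "\<forall>v\<in>S. \<kappa> v + t * w' v \<ge> 0"
    proof
      fix v assume v: "v \<in> S"
      show "0 \<le> \<kappa> v + t * w' v"
      proof (cases "w' v < 0")
        case False
        then show ?thesis using v t0 less.prems(2) by auto
      next
        case True
        then have "t \<le> \<kappa> v / (- w' v)"
          using v Ine unfolding t_def I_def by (auto intro: Min_le)
        then show ?thesis using True by (simp add: field_simps)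
      qed
    qed
    have z: "\<kappa> g1 + t * w' g1 = 0" using g1 by auto
    have "x = (\<Sum>v\<in>S. (\<kappa> v + t * w' v) *\<^sub>R v)"
    proof -
      have "(\<Sum>v\<in>S. (t * w' v) *\<^sub>R v) = t *\<^sub>R (\<Sum>v\<in>S. w' v *\<^sub>R v)"
        by (simp add: scaleR_sum_right)
      then show ?thesis using less.prems(3) w' by (simp add: scaleR_add_left sum.distrib)
    qed
    also have "\<dots> = (\<Sum>v\<in>S - {g1}. (\<kappa> v + t * w' v) *\<^sub>R v)"
      using sum.remove[OF less.prems(1) g1(1), of "\<lambda>v. (\<kappa> v + t * w' v) *\<^sub>R v"] z by simp
    finally have xe: "x = (\<Sum>v\<in>S - {g1}. (\<kappa> v + t * w' v) *\<^sub>R v)" .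
    have "card (S - {g1}) < card S"
      using g1(1) less.prems(1) by (meson card_Diff1_less)
    from less.hyps[OF this _ _ xe] nn less.prems(1)
    obtain S' \<kappa>' where "finite S'" "S' \<subseteq> S - {g1}" "card S' \<le> DIM('a)" "\<forall>g\<in>S'. \<kappa>' g \<ge> 0"
       "x = (\<Sum>g\<in>S'. \<kappa>' g *\<^sub>R g)" by auto
    then show ?thesis by blast
  qed
qed

definition "pin_concl A G \<longleftrightarrow> (\<exists>S c0 c. finite S \<and> S \<subseteq> G \<and> card S \<le> DIM('a) \<and> c0 \<ge> 0 \<and>
   (\<forall>g\<in>S. c g \<ge> 0) \<and> c0 + sum c S = 1 \<and> c0 *\<^sub>R A + (\<Sum>g\<in>S. c g *\<^sub>R g) = (0::'a::euclidean_space))"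

lemma pin_cone:
  fixes A :: "'a::euclidean_space"
  assumes "finite S" "S \<subseteq> G" "\<forall>g\<in>S. \<kappa> g \<ge> 0" "- A = (\<Sum>g\<in>S. \<kappa> g *\<^sub>R g)"
  shows "pin_concl A G"
proof -
  obtain S' \<kappa>' where S': "finite S'" "S' \<subseteq> S" "card S' \<le> DIM('a)" "\<forall>g\<in>S'. \<kappa>' g \<ge> 0"
       "- A = (\<Sum>g\<in>S'. \<kappa>' g *\<^sub>R g)"
    using cone_reduce[OF assms(1,3,4)] by blast
  define N where "N = 1 + sum \<kappa>' S'"
  have N: "N > 0" unfolding N_def using S'(4) by (smt (verit) sum_nonneg)
  have "(1/N) *\<^sub>R A + (\<Sum>g\<in>S'. (\<kappa>' g / N) *\<^sub>R g) = (1/N) *\<^sub>R (A + (\<Sum>g\<in>S'. \<kappa>' g *\<^sub>R g))"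
    by (simp add: scaleR_add_right scaleR_sum_right)
  also have "\<dots> = 0" using S'(5) by (metis add.right_inverse scaleR_zero_right)
  finally have e: "(1/N) *\<^sub>R A + (\<Sum>g\<in>S'. (\<kappa>' g / N) *\<^sub>R g) = 0" .
  have s: "1/N + (\<Sum>g\<in>S'. \<kappa>' g / N) = 1"
    using N by (simp add: sum_divide_distrib[symmetric] N_def field_simps)
  show ?thesis unfolding pin_concl_def
    apply (rule exI[of _ S'], rule exI[of _ "1/N"], rule exI[of _ "\<lambda>g. \<kappa>' g / N"])
    apply (intro conjI)
    using S'(1) apply blast
    using S'(2) assms(2) apply blast
    using S'(3) apply blast
    using N apply simp
    using S'(4) N apply simp
    using s apply blast
    using e apply blast
    done
qed

lemma pin:
  fixes A :: "'a::euclidean_space"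
  assumes "0 \<in> convex hull (insert A G)"
  shows "pin_concl A G"
proof (cases "A = 0")
  case True
  show ?thesis unfolding pin_concl_def
    by (rule exI[of _ "{}"], rule exI[of _ 1]) (auto simp: True)
next
  case Anz: False
  have Gne: "G \<noteq> {}" using assms Anz by auto
  obtain \<mu> \<nu> y where mu: "\<mu> \<ge> 0" "\<nu> \<ge> 0" "\<mu> + \<nu> = 1" "y \<in> convex hull G" "0 = \<mu> *\<^sub>R A + \<nu> *\<^sub>R y"
    using assms unfolding convex_hull_insert[OF Gne] by blast
  show ?thesis
  proof (cases "\<mu> > 0")
    case True
    obtain S u where Su: "finite S" "S \<subseteq> G" "\<forall>x\<in>S. 0 \<le> u x" "sum u S = 1" "(\<Sum>x\<in>S. u x *\<^sub>R x) = y"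
      using mu(4) unfolding convex_hull_explicit by blast
    have e1: "\<mu> *\<^sub>R A = - (\<nu> *\<^sub>R y)" using mu(5) by (metis add_eq_0_iff2 eq_neg_iff_add_eq_0)
    have "- A = - ((1/\<mu>) *\<^sub>R (\<mu> *\<^sub>R A))" using True by simp
    also have "\<dots> = (\<nu> / \<mu>) *\<^sub>R y" unfolding e1 by simp
    also have "\<dots> = (\<Sum>x\<in>S. ((\<nu> / \<mu>) * u x) *\<^sub>R x)"
      using Su(5) by (auto simp: scaleR_sum_right)
    finally show ?thesis
      by (rule pin_cone[OF Su(1,2), rotated]) (use Su(3) True mu(2) in \<open>simp\<close>)
  next
    case False
    then have "\<mu> = 0" "\<nu> = 1" using mu by auto
    then have y0: "y = 0" using mu(5) by simp
    obtain S u where Su: "finite S" "S \<subseteq> G" "card S \<le> DIM('a) + 1" "\<forall>x\<in>S. 0 \<le> u x" "sum u S = 1" "(\<Sum>x\<in>S. u x *\<^sub>R x) = 0"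
    proof -
      have "0 \<in> convex hull G" using mu(4) y0 by simp
      then have "\<exists>S u. finite S \<and> S \<subseteq> G \<and> card S \<le> DIM('a) + 1 \<and> (\<forall>x\<in>S. 0 \<le> u x) \<and> sum u S = 1 \<and> (\<Sum>x\<in>S. u x *\<^sub>R x) = 0"
        by (subst (asm) convex_hull_caratheodory) (simp only: mem_Collect_eq)
      then obtain S u where "finite S \<and> S \<subseteq> G \<and> card S \<le> DIM('a) + 1 \<and> (\<forall>x\<in>S. 0 \<le> u x) \<and> sum u S = 1 \<and> (\<Sum>x\<in>S. u x *\<^sub>R x) = 0"
        by (elim exE)
      then show ?thesis using that by (elim conjE)
    qed
    define P where "P = {x\<in>S. u x \<noteq> 0}"
    have P: "finite P" "P \<subseteq> G" "card P \<le> DIM('a) + 1" "\<forall>x\<in>P. 0 < u x"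
    proof -
      have "P \<subseteq> S" unfolding P_def by blast
      then show "finite P" "P \<subseteq> G" "card P \<le> DIM('a) + 1" "\<forall>x\<in>P. 0 < u x"
      proof -
        show "finite P" using \<open>P \<subseteq> S\<close> Su(1) finite_subset by blast
        show "P \<subseteq> G" using \<open>P \<subseteq> S\<close> Su(2) by blast
        show "card P \<le> DIM('a) + 1" using card_mono[OF Su(1) \<open>P \<subseteq> S\<close>] Su(3) by linarith
        show "\<forall>x\<in>P. 0 < u x" using Su(4) unfolding P_def by force
      qed
    qed
    have Psum: "sum u P = 1" "(\<Sum>x\<in>P. u x *\<^sub>R x) = 0"
    proof -
      have "sum u S = sum u P" "(\<Sum>x\<in>S. u x *\<^sub>R x) = (\<Sum>x\<in>P. u x *\<^sub>R x)"
        by (rule sum.mono_neutral_right, use Su(1) in \<open>auto simp: P_def\<close>)+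
      then show "sum u P = 1" "(\<Sum>x\<in>P. u x *\<^sub>R x) = 0" using Su by auto
    qed
    show ?thesis
    proof (cases "card P \<le> DIM('a)")
      case True
      show ?thesis unfolding pin_concl_def
        apply (rule exI[of _ P], rule exI[of _ 0], rule exI[of _ u])
        apply (intro conjI)
        using P Psum True by (simp_all add: less_imp_le)
    next
      case notle: False
      show ?thesis
      proof (cases "span P = UNIV")
        case True
        have "- A \<in> range (\<lambda>u. \<Sum>v\<in>P. u v *\<^sub>R v)"
          using True span_finite[OF P(1)] by (metis UNIV_I)
        then obtain \<nu>' where nu: "- A = (\<Sum>v\<in>P. \<nu>' v *\<^sub>R v)"
          by (rule rangeE)
        define s where "s = (\<Sum>v\<in>P. \<bar>\<nu>' v\<bar> / u v)"
        have sge: "s * u v \<ge> \<bar>\<nu>' v\<bar>" if "v \<in> P" for v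
        proof -
          have "\<bar>\<nu>' v\<bar> / u v \<le> s"
            unfolding s_def using P that
            by (intro member_le_sum) auto
          then show ?thesis using P(4) that by (simp add: field_simps)
        qed
        have "- A = (\<Sum>v\<in>P. \<nu>' v *\<^sub>R v) + s *\<^sub>R (\<Sum>x\<in>P. u x *\<^sub>R x)"
          using nu Psum by simp
        also have "\<dots> = (\<Sum>v\<in>P. (\<nu>' v + s * u v) *\<^sub>R v)"
          by (simp add: scaleR_sum_right scaleR_add_left sum.distrib)
        finally show ?thesis
          by (rule pin_cone[OF P(1,2), rotated])
             (use sge in \<open>smt (verit) abs_ge_minus_self\<close>)
      next
        case False
        have "0 \<in> convex hull P" using Psum P(4) unfolding convex_hull_finite[OF P(1)]
          by (intro CollectI exI[of _ u]) (simp add: less_imp_le)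
        then have "0 \<in> affine hull P" using convex_hull_subset_affine_hull by blast
        then have ad: "aff_dim P = int (dim P)" by (rule aff_dim_zero)
        have "dim P \<noteq> DIM('a)" using False dim_eq_full by blast
        then have dl: "dim P < DIM('a)" using dim_subset_UNIV[of P] by linarith
        obtain Q where Q: "finite Q" "Q \<subseteq> P" "card Q \<le> aff_dim P + 1" "0 \<in> convex hull Q"
          using \<open>0 \<in> convex hull P\<close> unfolding caratheodory_aff_dim[of P] by blast
        obtain w where w: "\<forall>x\<in>Q. 0 \<le> w x" "sum w Q = 1" "(\<Sum>x\<in>Q. w x *\<^sub>R x) = 0"
          using Q(4) unfolding convex_hull_finite[OF Q(1)] by blast
        have "card Q \<le> DIM('a)" using Q(3) ad dl by linarith
        then show ?thesis unfolding pin_concl_def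
          apply (rule_tac exI[of _ Q], rule_tac exI[of _ 0], rule_tac exI[of _ w])
          apply (intro conjI)
          using Q P w by simp_all
      qed
    qed
  qed
qed



lemma gateaux_unique:
  assumes "has_gateaux_diff \<phi> x d" "has_gateaux_diff \<phi> x d'"
  shows "d' = d"
proof (rule blinfun_eqI)
  fix v
  show "blinfun_apply d' v = blinfun_apply d v"
    using tendsto_unique[OF trivial_limit_at_right_real] assms[unfolded has_gateaux_diff_def, THEN spec[of _ v]]
    by blast
qed

lemma gateaux_diff_works:
  assumes "gateaux_differentiable \<phi> x"
  shows "has_gateaux_diff \<phi> x (gateaux_diff \<phi> x)"
proof -
  obtain d where d: "has_gateaux_diff \<phi> x d" using assms unfolding gateaux_differentiable_def by blast
  have "gateaux_diff \<phi> x = d" unfolding gateaux_diff_def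
    apply (rule the_equality)
     apply (rule d)
    apply (erule gateaux_unique[OF d])
    done
  then show ?thesis using d by simp
qed

definition grad :: "('a::euclidean_space \<Rightarrow>\<^sub>L real) \<Rightarrow> 'a" where
  "grad d = (\<Sum>b\<in>Basis. blinfun_apply d b *\<^sub>R b)"

lemma grad_inner: "blinfun_apply d v = grad d \<bullet> v"
proof -
  have "blinfun_apply d v = blinfun_apply d (\<Sum>b\<in>Basis. (v \<bullet> b) *\<^sub>R b)"
    by (simp add: euclidean_representation)
  also have "\<dots> = (\<Sum>b\<in>Basis. (v \<bullet> b) * blinfun_apply d b)"
    by (simp add: blinfun.sum_right blinfun.scaleR_right)
  also have "\<dots> = grad d \<bullet> v"
    unfolding grad_def inner_sum_left inner_scaleR_left
    by (intro sum.cong refl, subst inner_commute, rule mult.commute)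
  finally show ?thesis .
qed

lemma grad_cont: "continuous_on UNIV (grad :: ('a::euclidean_space \<Rightarrow>\<^sub>L real) \<Rightarrow> 'a)"
proof -
  have "\<And>b. bounded_linear (\<lambda>d. blinfun_apply d b *\<^sub>R (b::'a))"
    by (rule bounded_linear_compose[OF bounded_linear_scaleR_left blinfun.bounded_linear_left])
  then have "bounded_linear (grad :: ('a \<Rightarrow>\<^sub>L real) \<Rightarrow> 'a)"
    unfolding grad_def by (rule bounded_linear_sum)
  then show ?thesis by (rule linear_continuous_on)
qed


theorem corollary4p5:
  fixes h :: "'a::euclidean_space \<Rightarrow> 'b::t2_space \<Rightarrow> real"
    and f :: "'a \<Rightarrow> real"
    and \<Omega> :: "'a set"
    and xh :: 'a
  assumes T_compact: "compact (UNIV :: 'b set)"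
    and \<Omega>_open: "open \<Omega>" and \<Omega>_ne: "\<Omega> \<noteq> {}"
    and xh_in: "xh \<in> \<Omega>"
    and xh_feas: "\<forall>t. h xh t \<ge> 0"
    and xh_opt: "\<forall>x\<in>\<Omega>. (\<forall>t. h x t \<ge> 0) \<longrightarrow> f x \<le> f xh"
    and a: "{t. h xh t = 0} \<noteq> {}"
    and b1: "gateaux_differentiable f xh"
    and b2: "equi_gateaux_differentiable (\<lambda>t x. h x t) UNIV xh"
    and c: "equi_lsc (\<lambda>t x. h x t) (UNIV - {t. h xh t = 0}) xh"
    and d1: "continuous_on UNIV (\<lambda>t. h xh t)"
    and d2: "continuous_on UNIV (\<lambda>t. gateaux_diff (\<lambda>x. h x t) xh)"
  shows "\<exists>k::nat. \<exists>lam::nat \<Rightarrow> real. \<exists>ts::nat \<Rightarrow> 'b.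
           k \<le> DIM('a) \<and>
           (\<forall>i\<le>k. lam i \<ge> 0 \<and> ts i \<in> {t. h xh t = 0}) \<and>
           (\<Sum>i\<le>k. lam i) = 1 \<and>
           lam 0 *\<^sub>R gateaux_diff f xh
             + (\<Sum>i\<in>{1..k}. lam i *\<^sub>R gateaux_diff (\<lambda>x. h x (ts i)) xh) = 0 \<and>
           (0 \<notin> convex hull ((\<lambda>t. gateaux_diff (\<lambda>x. h x t) xh) ` {t. h xh t = 0})
              \<longrightarrow> lam 0 \<noteq> 0)"
proof -
  define T0 where "T0 = {t. h xh t = 0}"
  define D where "D = (\<lambda>t. gateaux_diff (\<lambda>x. h x t) xh)"
  define df where "df = gateaux_diff f xh"
  have dD: "continuous_on UNIV D" using d2 unfolding D_def .
  have cT0: "compact T0"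
  proof -
    have "closed T0" unfolding T0_def using closed_Collect_eq[OF d1 continuous_on_const] .
    then show ?thesis using compact_Int_closed[OF T_compact] by simp
  qed
  define Gs where "Gs = (grad \<circ> D) ` T0"
  have cGs: "compact Gs" unfolding Gs_def
    by (rule compact_continuous_image[OF continuous_on_compose[OF continuous_on_subset[OF dD]
          continuous_on_subset[OF grad_cont]] cT0]) simp_all
  define KS where "KS = insert (grad df) Gs"
  have cC: "compact (convex hull KS)" using cGs unfolding KS_def
    by (intro compact_convex_hull compact_insert)
  have zero: "0 \<in> convex hull KS"
  proof (rule ccontr)
    assume nz: "0 \<notin> convex hull KS"
    obtain v b where vb: "v \<noteq> 0" "0 < b" "\<forall>x\<in>convex hull KS. inner v x > b"
      using separating_hyperplane_closed_0[OF convex_convex_hull compact_imp_closed[OF cC] nz] by blast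
    have "grad df \<in> convex hull KS" unfolding KS_def by (rule hull_inc) simp
    then have hf: "blinfun_apply df v > b"
      using vb(3) unfolding grad_inner by (metis inner_commute)
    have hT: "blinfun_apply (D t) v > b" if "t \<in> T0" for t
    proof -
      have "grad (D t) \<in> convex hull KS" unfolding KS_def Gs_def
        by (rule hull_inc) (use that in simp)
      then show ?thesis using vb(3) unfolding grad_inner by (metis inner_commute)
    qed
    define \<phi> where "\<phi> = (\<lambda>t. blinfun_apply (D t) v)"
    have c\<phi>: "continuous_on UNIV \<phi>"
    proof -
      have "continuous_on UNIV ((\<lambda>d. blinfun_apply d v) \<circ> D)"
        by (rule continuous_on_compose[OF dD linear_continuous_on[OF blinfun.bounded_linear_left]])
      then show ?thesis unfolding \<phi>_def comp_def .
    qed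
    define U where "U = {t. b/2 < \<phi> t}"
    have oU: "open U" unfolding U_def by (rule open_Collect_less[OF continuous_on_const c\<phi>])
    have T0U: "T0 \<subseteq> U" using hT vb(2) unfolding U_def \<phi>_def by force
    define K where "K = - U"
    have cK: "compact K"
      using compact_Int_closed[OF T_compact, of K] oU unfolding K_def by (simp add: closed_Compl)
    have hKpos: "h xh t > 0" if "t \<in> K" for t
    proof -
      have "t \<notin> T0" using that T0U unfolding K_def by blast
      then show ?thesis using xh_feas unfolding T0_def by (metis less_eq_real_def mem_Collect_eq)
    qed
    obtain m where m: "m > 0" "\<forall>t\<in>K. m \<le> h xh t"
    proof (cases "K = {}")
      case True
      then show ?thesis using that[of 1] by simp
    next
      case False
      obtain t0 where "t0 \<in> K" "\<forall>t\<in>K. h xh t0 \<le> h xh t"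
        using continuous_attains_inf[OF cK False continuous_on_subset[OF d1]] by blast
      then show ?thesis using that[of "h xh t0"] hKpos by blast
    qed
    obtain W where W: "open W" "xh \<in> W" "\<forall>y\<in>W. \<forall>t\<in>UNIV - T0. h y t - h xh t > - m"
      using c m(1) unfolding equi_lsc_def T0_def by blast
    have b2': "\<forall>v. \<forall>\<epsilon>>0. \<exists>\<delta>>0. \<forall>s. 0 < s \<and> s < \<delta> \<longrightarrow>
        (\<forall>t. \<bar>(h (xh + s *\<^sub>R v) t - h xh t - s * blinfun_apply (D t) v) / s\<bar> \<le> \<epsilon>)"
      using b2 unfolding equi_gateaux_differentiable_def D_def by simp
    have "b/4 > 0" using vb(2) by simp
    then obtain \<delta> where \<delta>: "\<delta> > 0" "\<forall>s. 0 < s \<and> s < \<delta> \<longrightarrow>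
        (\<forall>t. \<bar>(h (xh + s *\<^sub>R v) t - h xh t - s * \<phi> t) / s\<bar> \<le> b/4)"
      using b2'[rule_format, of "b/4" v] unfolding \<phi>_def by blast
    have lim: "((\<lambda>s. (f (xh + s *\<^sub>R v) - f xh) / s) \<longlongrightarrow> blinfun_apply df v) (at_right 0)"
      using gateaux_diff_works[OF b1] unfolding has_gateaux_diff_def df_def by blast
    have ev1: "eventually (\<lambda>s. 0 < (f (xh + s *\<^sub>R v) - f xh) / s) (at_right 0)"
      using order_tendstoD(1)[OF lim] hf vb(2) by simp
    have ev2: "eventually (\<lambda>s. xh + s *\<^sub>R v \<in> \<Omega> \<inter> W) (at_right 0)"
    proof -
      have "((\<lambda>s::real. xh + s *\<^sub>R v) \<longlongrightarrow> xh + 0 *\<^sub>R v) (at_right 0)"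
        by (intro tendsto_intros)
      then show ?thesis
        using topological_tendstoD[of "\<lambda>s::real. xh + s *\<^sub>R v" xh "at_right 0" "\<Omega> \<inter> W"]
          \<Omega>_open W(1,2) xh_in by auto
    qed
    have ev3: "eventually (\<lambda>s. s \<in> {0<..<\<delta>}) (at_right (0::real))"
      by (rule eventually_at_right_real[OF \<delta>(1)])
    obtain s where s: "0 < (f (xh + s *\<^sub>R v) - f xh) / s" "xh + s *\<^sub>R v \<in> \<Omega> \<inter> W" "s \<in> {0<..<\<delta>}"
      using eventually_happens'[OF trivial_limit_at_right_real eventually_conj[OF ev1 eventually_conj[OF ev2 ev3]]]
      by blast
    have s0: "0 < s" "s < \<delta>" using s(3) by auto
    have feas: "\<forall>t. h (xh + s *\<^sub>R v) t \<ge> 0"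
    proof
      fix t
      show "h (xh + s *\<^sub>R v) t \<ge> 0"
      proof (cases "t \<in> U")
        case True
        define X where "X = h (xh + s *\<^sub>R v) t - h xh t - s * \<phi> t"
        have "\<bar>X / s\<bar> \<le> b/4" using \<delta>(2) s0 unfolding X_def by blast
        then have "- (b/4) \<le> X / s" by linarith
        then have "- (b/4) * s \<le> X" using s0(1) by (simp add: le_divide_eq)
        moreover have "\<phi> t > b/2" using True unfolding U_def by simp
        then have "s * \<phi> t \<ge> s * (b/2)" using s0(1) by simp
        moreover have "h xh t \<ge> 0" using xh_feas by simp
        moreover have "s * (b/2) = 2 * ((b/4) * s)" by simp
        moreover have "(b/4) * s > 0" using s0(1) vb(2) by simp
        ultimately show ?thesis unfolding X_def by linarith
      next
        case False
        then have "t \<in> K" "t \<notin> T0" using T0U unfolding K_def by auto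
        then have "h (xh + s *\<^sub>R v) t - h xh t > - m" using W(3) s(2) by blast
        with m(2) \<open>t \<in> K\<close> show ?thesis by fastforce
      qed
    qed
    have "f (xh + s *\<^sub>R v) \<le> f xh" using xh_opt s(2) feas by blast
    moreover have "f (xh + s *\<^sub>R v) - f xh > 0" using s(1) s0(1) by (simp add: zero_less_divide_iff)
    ultimately show False by linarith
  qed
  then have "pin_concl (grad df) Gs" unfolding KS_def by (rule pin)
  then obtain S c0 c where Sc: "finite S" "S \<subseteq> Gs" "card S \<le> DIM('a)" "c0 \<ge> 0"
      "\<forall>g\<in>S. c g \<ge> 0" "c0 + sum c S = 1" "c0 *\<^sub>R grad df + (\<Sum>g\<in>S. c g *\<^sub>R g) = 0"
    unfolding pin_concl_def by blast
  have "\<forall>g\<in>S. \<exists>t. t \<in> T0 \<and> g = grad (D t)" using Sc(2) unfolding Gs_def by auto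
  then obtain \<tau> where \<tau>: "\<forall>g\<in>S. \<tau> g \<in> T0 \<and> g = grad (D (\<tau> g))" by metis
  obtain e where e: "bij_betw e {1..card S} S" using ex_bij_betw_nat_finite_1[OF Sc(1)] by blast
  obtain t0 where t0: "t0 \<in> T0" using a unfolding T0_def by blast
  define k where "k = card S"
  define lam where "lam = (\<lambda>i. if i = 0 then c0 else c (e i))"
  define ts where "ts = (\<lambda>i. if i = 0 then t0 else \<tau> (e i))"
  have e': "bij_betw e {1..k} S" using e unfolding k_def .
  have eS: "e i \<in> S" if "i \<in> {1..k}" for i using e' that bij_betwE by blast
  have lam1: "(\<Sum>i\<in>{1..k}. lam i) = sum c S"
  proof -
    have "(\<Sum>i\<in>{1..k}. lam i) = (\<Sum>i\<in>{1..k}. c (e i))" by (rule sum.cong) (auto simp: lam_def)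
    also have "\<dots> = sum c S" by (rule sum.reindex_bij_betw[OF e'])
    finally show ?thesis .
  qed
  have atm: "{..k} = insert 0 {1..k}" by auto
  have split: "(\<Sum>i\<le>k. lam i) = lam 0 + (\<Sum>i\<in>{1..k}. lam i)"
    unfolding atm by (subst sum.insert) auto
  have sumlam: "(\<Sum>i\<le>k. lam i) = 1" using split lam1 Sc(6) by (simp add: lam_def)
  have lamnn: "\<forall>i\<le>k. lam i \<ge> 0 \<and> ts i \<in> T0"
  proof (intro allI impI)
    fix i assume "i \<le> k"
    show "lam i \<ge> 0 \<and> ts i \<in> T0"
    proof (cases "i = 0")
      case True then show ?thesis using Sc(4) t0 by (simp add: lam_def ts_def)
    next
      case False
      then have "i \<in> {1..k}" using \<open>i \<le> k\<close> by auto
      then have "e i \<in> S" by (rule eS)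
      then show ?thesis using False Sc(5) \<tau> by (simp add: lam_def ts_def)
    qed
  qed
  have eq: "lam 0 *\<^sub>R df + (\<Sum>i\<in>{1..k}. lam i *\<^sub>R D (ts i)) = 0"
  proof (rule blinfun_eqI)
    fix w
    have "(\<Sum>i\<in>{1..k}. lam i * blinfun_apply (D (ts i)) w) = (\<Sum>i\<in>{1..k}. c (e i) * blinfun_apply (D (\<tau> (e i))) w)"
      by (rule sum.cong) (auto simp: lam_def ts_def)
    also have "\<dots> = (\<Sum>g\<in>S. c g * blinfun_apply (D (\<tau> g)) w)"
      by (rule sum.reindex_bij_betw[OF e', where g = "\<lambda>g. c g * blinfun_apply (D (\<tau> g)) w"])
    also have "\<dots> = (\<Sum>g\<in>S. c g * (g \<bullet> w))"
    proof (rule sum.cong[OF refl])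
      fix g assume "g \<in> S"
      then have "grad (D (\<tau> g)) = g" using \<tau> by auto
      then show "c g * blinfun_apply (D (\<tau> g)) w = c g * (g \<bullet> w)" by (simp add: grad_inner)
    qed
    finally have ss: "(\<Sum>i\<in>{1..k}. lam i * blinfun_apply (D (ts i)) w) = (\<Sum>g\<in>S. c g * (g \<bullet> w))" .
    have "blinfun_apply (lam 0 *\<^sub>R df + (\<Sum>i\<in>{1..k}. lam i *\<^sub>R D (ts i))) w
        = c0 * blinfun_apply df w + (\<Sum>i\<in>{1..k}. lam i * blinfun_apply (D (ts i)) w)"
      by (simp add: blinfun.add_left blinfun.sum_left blinfun.scaleR_left lam_def)
    also have "\<dots> = c0 * (grad df \<bullet> w) + (\<Sum>g\<in>S. c g * (g \<bullet> w))"
      unfolding ss by (simp add: grad_inner)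
    also have "\<dots> = (c0 *\<^sub>R grad df + (\<Sum>g\<in>S. c g *\<^sub>R g)) \<bullet> w"
      by (simp add: inner_add_left inner_sum_left)
    also have "\<dots> = 0" using Sc(7) by simp
    finally show "blinfun_apply (lam 0 *\<^sub>R df + (\<Sum>i\<in>{1..k}. lam i *\<^sub>R D (ts i))) w = blinfun_apply 0 w"
      by simp
  qed
  have final: "0 \<notin> convex hull (D ` T0) \<longrightarrow> lam 0 \<noteq> 0"
  proof (intro impI notI)
    assume nz: "0 \<notin> convex hull (D ` T0)" and l0: "lam 0 = 0"
    have s1: "(\<Sum>i\<in>{1..k}. lam i) = 1" using sumlam split l0 by simp
    have "(\<Sum>i\<in>{1..k}. lam i *\<^sub>R D (ts i)) \<in> convex hull (D ` T0)"
    proof (rule convex_sum)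
      show "finite {1..k}" by simp
      show "convex (convex hull (D ` T0))" by (rule convex_convex_hull)
      show "sum lam {1..k} = 1" by (rule s1)
      fix i assume i: "i \<in> {1..k}"
      then show "0 \<le> lam i" using lamnn by auto
      show "D (ts i) \<in> convex hull (D ` T0)"
        by (rule hull_inc) (use i lamnn in auto)
    qed
    then show False using eq l0 nz by simp
  qed
  show ?thesis
    apply (rule exI[of _ k], rule exI[of _ lam], rule exI[of _ ts])
    using Sc(3) lamnn sumlam eq final unfolding k_def[symmetric] T0_def D_def df_def
    by blast
qed

end
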